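(* Let $\mathfrak M$ be a finite dimensional right $\mathbb H$-linear space of $\mathbb H^r$-valued functions, each of which is given in a neighborhood of the origin by a convergent series $f=\sum_{n\ge0}P_nf_n$ with $f_n\in\mathbb H^r$ (as is the case for functions hyperholomorphic of axial type near the origin). Then $\mathfrak M$ is invariant under $R_0:\sum_nP_nf_n\mapsto\sum_nP_nf_{n+1}$ if and only if there exist $N\in\mathbb N$ and matrices $(\mathsf C,\mathsf A)\in\mathbb H^{r\times N}\times\mathbb H^{N\times N}$ such that $\mathfrak M=\{\sum_{n\ge0}P_n\mathsf C\mathsf A^n\xi:\ \xi\in\mathbb H^N\}$. Moreover, for any such pair, $N\ge\dim\mathfrak M$, with equality if and only if the pair is observable, i.e. $\bigcap_{n\ge0}\ker\mathsf C\mathsf A^n=\{0\}$.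
   Context: For $m\ge0$, $T^m_j=\frac{2(m-j+1)}{(m+1)(m+2)}$, $c_m=\sum_{j=0}^m(-1)^jT^m_j$, $P_m(x)=\frac1{c_m}\sum_{j=0}^mT^m_jx^{m-j}\overline{x}^{\,j}$ for quaternions $x$, $\overline x$ the quaternionic conjugate. These polynomials are Fueter hyperholomorphic and a function expanded as $\sum_nP_nf_n$ determines its coefficients uniquely. *)

theory Defs
  imports "HOL-Analysis.Analysis"
begin

datatype quat = Quat (Re: real) (Im1: real) (Im2: real) (Im3: real)

lemma quat_eq_iff: "x = y \<longleftrightarrow> Re x = Re y \<and> Im1 x = Im1 y \<and> Im2 x = Im2 y \<and> Im3 x = Im3 y"
  by (cases x; cases y) auto

instantiation quat :: ring_1
begin
definition "0 = Quat 0 0 0 0"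
definition "1 = Quat 1 0 0 0"
definition "x + y = Quat (Re x + Re y) (Im1 x + Im1 y) (Im2 x + Im2 y) (Im3 x + Im3 y)"
definition "x - y = Quat (Re x - Re y) (Im1 x - Im1 y) (Im2 x - Im2 y) (Im3 x - Im3 y)"
definition "- x = Quat (- Re x) (- Im1 x) (- Im2 x) (- Im3 x)"
definition "x * y = Quat
   (Re x * Re y - Im1 x * Im1 y - Im2 x * Im2 y - Im3 x * Im3 y)
   (Re x * Im1 y + Im1 x * Re y + Im2 x * Im3 y - Im3 x * Im2 y)
   (Re x * Im2 y - Im1 x * Im3 y + Im2 x * Re y + Im3 x * Im1 y)
   (Re x * Im3 y + Im1 x * Im2 y - Im2 x * Im1 y + Im3 x * Re y)"
instance
  by standard
    (auto simp: quat_eq_iff zero_quat_def one_quat_def plus_quat_def minus_quat_def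
      uminus_quat_def times_quat_def algebra_simps)
end

definition quat_coords :: "quat \<Rightarrow> real \<times> real \<times> real \<times> real" where
  "quat_coords q = (Re q, Im1 q, Im2 q, Im3 q)"

lemma inj_quat_coords: "inj quat_coords"
  by (auto simp: inj_def quat_coords_def quat_eq_iff)

lemma surj_quat_coords: "surj quat_coords"
  by (auto simp: quat_coords_def image_def intro!: exI[of _ "Quat _ _ _ _"])

instantiation quat :: topological_space
begin
definition open_quat_def: "open (S :: quat set) \<longleftrightarrow> open (quat_coords ` S)"
instance
proof
  show "open (UNIV :: quat set)" using surj_quat_coords by (simp add: open_quat_def)
next
  fix S T :: "quat set" assume "open S" "open T"
  then show "open (S \<inter> T)"
    using inj_quat_coords by (simp add: open_quat_def image_Int open_Int)
next
  fix K :: "quat set set" assume "\<forall>S\<in>K. open S"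
  then show "open (\<Union>K)" by (auto simp: open_quat_def image_Union intro!: open_Union)
qed
end

definition qcnj :: "quat \<Rightarrow> quat" where
  "qcnj x = Quat (Re x) (- Im1 x) (- Im2 x) (- Im3 x)"

definition qreal :: "real \<Rightarrow> quat" where
  "qreal t = Quat t 0 0 0"

definition T :: "nat \<Rightarrow> nat \<Rightarrow> real" where
  "T m j = 2 * (real m - real j + 1) / ((real m + 1) * (real m + 2))"

definition cc :: "nat \<Rightarrow> real" where
  "cc m = (\<Sum>j\<le>m. (-1) ^ j * T m j)"

definition P :: "nat \<Rightarrow> quat \<Rightarrow> quat" where
  "P m x = qreal (1 / cc m) * (\<Sum>j\<le>m. qreal (T m j) * x ^ (m - j) * qcnj x ^ j)"

text \<open>Elements of \<open>\<bbbH>\<^sup>k\<close> are functions \<open>nat \<Rightarrow> quat\<close> vanishing from index \<open>k\<close> on;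
  a \<open>m \<times> k\<close> matrix is a function \<open>nat \<Rightarrow> nat \<Rightarrow> quat\<close> of which only the entries
  with row index \<open>< m\<close> and column index \<open>< k\<close> are used.\<close>

definition qvecs :: "nat \<Rightarrow> (nat \<Rightarrow> quat) set" where
  "qvecs k = {v. \<forall>i\<ge>k. v i = 0}"

definition mv :: "nat \<Rightarrow> nat \<Rightarrow> (nat \<Rightarrow> nat \<Rightarrow> quat) \<Rightarrow> (nat \<Rightarrow> quat) \<Rightarrow> (nat \<Rightarrow> quat)" where
  "mv m k M v = (\<lambda>i. if i < m then (\<Sum>j<k. M i j * v j) else 0)"

definition CApow :: "nat \<Rightarrow> nat \<Rightarrow> (nat \<Rightarrow> nat \<Rightarrow> quat) \<Rightarrow> (nat \<Rightarrow> nat \<Rightarrow> quat)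
    \<Rightarrow> nat \<Rightarrow> (nat \<Rightarrow> quat) \<Rightarrow> (nat \<Rightarrow> quat)" where
  "CApow r N C A n \<xi> = mv r N C ((mv N N A ^^ n) \<xi>)"

definition observable :: "nat \<Rightarrow> nat \<Rightarrow> (nat \<Rightarrow> nat \<Rightarrow> quat) \<Rightarrow> (nat \<Rightarrow> nat \<Rightarrow> quat) \<Rightarrow> bool" where
  "observable r N C A \<longleftrightarrow> (\<forall>\<xi>\<in>qvecs N. (\<forall>n. CApow r N C A n \<xi> = (\<lambda>i. 0)) \<longrightarrow> \<xi> = (\<lambda>i. 0))"

text \<open>\<open>\<bbbH>\<^sup>r\<close>-valued functions are modelled as \<open>quat \<Rightarrow> nat \<Rightarrow> quat\<close>.
  Everything is considered near the origin, i.e. at the level of germs at \<open>0\<close>.\<close>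

definition series_near0 :: "(quat \<Rightarrow> nat \<Rightarrow> quat) \<Rightarrow> (nat \<Rightarrow> nat \<Rightarrow> quat) \<Rightarrow> bool" where
  "series_near0 f a \<longleftrightarrow> (\<forall>\<^sub>F x in nhds 0. \<forall>i. (\<lambda>n. P n x * a n i) sums f x i)"

definition has_expansion :: "nat \<Rightarrow> (quat \<Rightarrow> nat \<Rightarrow> quat) \<Rightarrow> (nat \<Rightarrow> nat \<Rightarrow> quat) \<Rightarrow> bool" where
  "has_expansion r f a \<longleftrightarrow> (\<forall>n. a n \<in> qvecs r) \<and> series_near0 f a"

definition germ_eq :: "(quat \<Rightarrow> nat \<Rightarrow> quat) \<Rightarrow> (quat \<Rightarrow> nat \<Rightarrow> quat) \<Rightarrow> bool" where
  "germ_eq f g \<longleftrightarrow> (\<forall>\<^sub>F x in nhds 0. f x = g x)"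

definition right_lin_space :: "(quat \<Rightarrow> nat \<Rightarrow> quat) set \<Rightarrow> bool" where
  "right_lin_space M \<longleftrightarrow> (\<lambda>x i. 0) \<in> M \<and>
     (\<forall>f\<in>M. \<forall>g\<in>M. (\<lambda>x i. f x i + g x i) \<in> M) \<and>
     (\<forall>f\<in>M. \<forall>q. (\<lambda>x i. f x i * q) \<in> M)"

definition rcomb :: "nat \<Rightarrow> (nat \<Rightarrow> quat \<Rightarrow> nat \<Rightarrow> quat) \<Rightarrow> (nat \<Rightarrow> quat) \<Rightarrow> (quat \<Rightarrow> nat \<Rightarrow> quat)" where
  "rcomb k b c = (\<lambda>x i. \<Sum>j<k. b j x i * c j)"

definition spans :: "(quat \<Rightarrow> nat \<Rightarrow> quat) set \<Rightarrow> nat \<Rightarrow> (nat \<Rightarrow> quat \<Rightarrow> nat \<Rightarrow> quat) \<Rightarrow> bool" where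
  "spans M k b \<longleftrightarrow> (\<forall>j<k. b j \<in> M) \<and> (\<forall>f\<in>M. \<exists>c. germ_eq f (rcomb k b c))"

definition is_basis :: "(quat \<Rightarrow> nat \<Rightarrow> quat) set \<Rightarrow> nat \<Rightarrow> (nat \<Rightarrow> quat \<Rightarrow> nat \<Rightarrow> quat) \<Rightarrow> bool" where
  "is_basis M k b \<longleftrightarrow> spans M k b \<and>
     (\<forall>c. germ_eq (rcomb k b c) (\<lambda>x i. 0) \<longrightarrow> (\<forall>j<k. c j = 0))"

definition fin_dim :: "(quat \<Rightarrow> nat \<Rightarrow> quat) set \<Rightarrow> bool" where
  "fin_dim M \<longleftrightarrow> (\<exists>k b. spans M k b)"

definition qdim :: "(quat \<Rightarrow> nat \<Rightarrow> quat) set \<Rightarrow> nat" where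
  "qdim M = (LEAST k. \<exists>b. is_basis M k b)"

definition R0_invariant :: "nat \<Rightarrow> (quat \<Rightarrow> nat \<Rightarrow> quat) set \<Rightarrow> bool" where
  "R0_invariant r M \<longleftrightarrow>
     (\<forall>f\<in>M. \<forall>a. has_expansion r f a \<longrightarrow> (\<exists>g\<in>M. has_expansion r g (\<lambda>n. a (Suc n))))"

definition realizes :: "nat \<Rightarrow> (quat \<Rightarrow> nat \<Rightarrow> quat) set \<Rightarrow> nat
    \<Rightarrow> (nat \<Rightarrow> nat \<Rightarrow> quat) \<Rightarrow> (nat \<Rightarrow> nat \<Rightarrow> quat) \<Rightarrow> bool" where
  "realizes r M N C A \<longleftrightarrow>
     (\<forall>f\<in>M. \<exists>\<xi>\<in>qvecs N. series_near0 f (\<lambda>n. CApow r N C A n \<xi>)) \<and>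
     (\<forall>\<xi>\<in>qvecs N. \<exists>f\<in>M. series_near0 f (\<lambda>n. CApow r N C A n \<xi>))"

end

theory Submission
  imports Defs "HOL-Complex_Analysis.Complex_Analysis"
begin

lemma quat_sel_simps[simp]:
  "quat.Re 0 = 0" "Im1 0 = 0" "Im2 0 = 0" "Im3 0 = 0"
  "quat.Re 1 = 1" "Im1 1 = 0" "Im2 1 = 0" "Im3 1 = 0"
  "quat.Re (x + y) = quat.Re x + quat.Re y" "Im1 (x + y) = Im1 x + Im1 y"
  "Im2 (x + y) = Im2 x + Im2 y" "Im3 (x + y) = Im3 x + Im3 y"
  "quat.Re (x - y) = quat.Re x - quat.Re y" "Im1 (x - y) = Im1 x - Im1 y"
  "Im2 (x - y) = Im2 x - Im2 y" "Im3 (x - y) = Im3 x - Im3 y"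
  "quat.Re (- x) = - quat.Re x" "Im1 (- x) = - Im1 x" "Im2 (- x) = - Im2 x" "Im3 (- x) = - Im3 x"
  by (simp_all add: zero_quat_def one_quat_def plus_quat_def minus_quat_def uminus_quat_def)

lemma quat_mult_sel[simp]:
  "quat.Re (x * y) = quat.Re x * quat.Re y - Im1 x * Im1 y - Im2 x * Im2 y - Im3 x * Im3 y"
  "Im1 (x * y) = quat.Re x * Im1 y + Im1 x * quat.Re y + Im2 x * Im3 y - Im3 x * Im2 y"
  "Im2 (x * y) = quat.Re x * Im2 y - Im1 x * Im3 y + Im2 x * quat.Re y + Im3 x * Im1 y"
  "Im3 (x * y) = quat.Re x * Im3 y + Im1 x * Im2 y - Im2 x * Im1 y + Im3 x * quat.Re y"
  by (simp_all add: times_quat_def)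

definition qnsq :: "quat \<Rightarrow> real" where
  "qnsq x = quat.Re x * quat.Re x + Im1 x * Im1 x + Im2 x * Im2 x + Im3 x * Im3 x"

definition qinv :: "quat \<Rightarrow> quat" where
  "qinv x = Quat (quat.Re x / qnsq x) (- Im1 x / qnsq x) (- Im2 x / qnsq x) (- Im3 x / qnsq x)"

lemma qnorm_pos: "x \<noteq> 0 \<Longrightarrow> qnsq x \<noteq> 0"
proof
  assume "x \<noteq> 0" "qnsq x = 0"
  then have "quat.Re x ^ 2 + Im1 x ^ 2 + Im2 x ^ 2 + Im3 x ^ 2 = 0" by (simp add: qnsq_def power2_eq_square)
  moreover have "0 \<le> quat.Re x ^ 2" "0 \<le> Im1 x ^ 2" "0 \<le> Im2 x ^ 2" "0 \<le> Im3 x ^ 2" by simp_all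
  ultimately have "quat.Re x ^ 2 = 0" "Im1 x ^ 2 = 0" "Im2 x ^ 2 = 0" "Im3 x ^ 2 = 0" by linarith+
  then have "quat.Re x = 0 \<and> Im1 x = 0 \<and> Im2 x = 0 \<and> Im3 x = 0" by simp
  then show False using \<open>x \<noteq> 0\<close> by (simp add: quat_eq_iff)
qed

lemma qinv_right: "x \<noteq> 0 \<Longrightarrow> x * qinv x = 1"
proof -
  assume "x \<noteq> 0"
  then have n: "qnsq x \<noteq> 0" by (rule qnorm_pos)
  show ?thesis using n unfolding quat_eq_iff qinv_def
    by (simp add: field_simps) (simp add: qnsq_def algebra_simps)
qed

lemma qinv_left: "x \<noteq> 0 \<Longrightarrow> qinv x * x = 1"
proof -
  assume "x \<noteq> 0"
  then have n: "qnsq x \<noteq> 0" by (rule qnorm_pos)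
  show ?thesis using n unfolding quat_eq_iff qinv_def
    by (simp add: field_simps) (simp add: qnsq_def algebra_simps)
qed

lemma quat_sum_sel:
  "quat.Re (sum g A) = (\<Sum>a\<in>A. quat.Re (g a))" "Im1 (sum g A) = (\<Sum>a\<in>A. Im1 (g a))"
  "Im2 (sum g A) = (\<Sum>a\<in>A. Im2 (g a))" "Im3 (sum g A) = (\<Sum>a\<in>A. Im3 (g a))"
  by (induct A rule: infinite_finite_induct) simp_all

lemma tendsto_quat_coords:
  "(f \<longlongrightarrow> l) F \<longleftrightarrow> ((\<lambda>x. quat_coords (f x)) \<longlongrightarrow> quat_coords l) F"
proof
  assume H: "(f \<longlongrightarrow> l) F"
  show "((\<lambda>x. quat_coords (f x)) \<longlongrightarrow> quat_coords l) F"
  proof (rule topological_tendstoI)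
    fix S' assume S': "open S'" "quat_coords l \<in> S'"
    have "quat_coords ` (quat_coords -` S') = S'" using surj_quat_coords
      by (simp add: surj_image_vimage_eq)
    then have "open (quat_coords -` S')" using S' by (simp add: open_quat_def)
    then have "eventually (\<lambda>x. f x \<in> quat_coords -` S') F"
      using H S' by (auto simp: tendsto_def)
    then show "eventually (\<lambda>x. quat_coords (f x) \<in> S') F" by simp
  qed
next
  assume H: "((\<lambda>x. quat_coords (f x)) \<longlongrightarrow> quat_coords l) F"
  show "(f \<longlongrightarrow> l) F"
  proof (rule topological_tendstoI)
    fix S assume S: "open S" "l \<in> S"
    then have "open (quat_coords ` S)" by (simp add: open_quat_def)
    then have "eventually (\<lambda>x. quat_coords (f x) \<in> quat_coords ` S) F"
      using H S by (auto simp: tendsto_def)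
    then show "eventually (\<lambda>x. f x \<in> S) F"
      by (rule eventually_mono) (use inj_quat_coords in \<open>auto simp: inj_image_mem_iff\<close>)
  qed
qed

lemma tendsto_pair_iff: "((\<lambda>x. (a x, b x)) \<longlongrightarrow> (p, q)) F \<longleftrightarrow> (a \<longlongrightarrow> p) F \<and> (b \<longlongrightarrow> q) F"
    for a :: "_ \<Rightarrow> 'a::topological_space" and b :: "_ \<Rightarrow> 'b::topological_space"
  proof
    assume h: "((\<lambda>x. (a x, b x)) \<longlongrightarrow> (p, q)) F"
    show "(a \<longlongrightarrow> p) F \<and> (b \<longlongrightarrow> q) F"
      using tendsto_fst[OF h] tendsto_snd[OF h] by simp
  next
    assume "(a \<longlongrightarrow> p) F \<and> (b \<longlongrightarrow> q) F"
    then show "((\<lambda>x. (a x, b x)) \<longlongrightarrow> (p, q)) F" by (simp add: tendsto_Pair)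
  qed

lemma tendsto_quat_iff:
  "(f \<longlongrightarrow> l) F \<longleftrightarrow> ((\<lambda>x. quat.Re (f x)) \<longlongrightarrow> quat.Re l) F \<and> ((\<lambda>x. Im1 (f x)) \<longlongrightarrow> Im1 l) F
     \<and> ((\<lambda>x. Im2 (f x)) \<longlongrightarrow> Im2 l) F \<and> ((\<lambda>x. Im3 (f x)) \<longlongrightarrow> Im3 l) F"
  unfolding tendsto_quat_coords quat_coords_def tendsto_pair_iff ..

lemma sums_quat_iff:
  "g sums s \<longleftrightarrow> (\<lambda>n. quat.Re (g n)) sums quat.Re s \<and> (\<lambda>n. Im1 (g n)) sums Im1 s
     \<and> (\<lambda>n. Im2 (g n)) sums Im2 s \<and> (\<lambda>n. Im3 (g n)) sums Im3 s"
  unfolding sums_def tendsto_quat_iff quat_sum_sel ..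

lemma qsums_add: "(g::nat\<Rightarrow>quat) sums s \<Longrightarrow> h sums t \<Longrightarrow> (\<lambda>n. g n + h n) sums (s + t)"
  by (simp add: sums_quat_iff sums_add)

lemma qsums_diff: "(g::nat\<Rightarrow>quat) sums s \<Longrightarrow> h sums t \<Longrightarrow> (\<lambda>n. g n - h n) sums (s - t)"
  by (simp add: sums_quat_iff sums_diff)

lemma qsums_zero: "(\<lambda>n. 0::quat) sums 0"
  by (simp add: sums_quat_iff)

lemma qsums_mult_right: "(g::nat\<Rightarrow>quat) sums s \<Longrightarrow> (\<lambda>n. g n * q) sums (s * q)"
  unfolding sums_quat_iff quat_mult_sel
  by (intro conjI sums_add sums_diff sums_mult2; simp)

lemma qsums_unique: "(g::nat\<Rightarrow>quat) sums s \<Longrightarrow> g sums t \<Longrightarrow> s = (t::quat)"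
  by (simp add: sums_quat_iff quat_eq_iff) (meson sums_unique2)

lemma qsums_sum: "finite S \<Longrightarrow> (\<forall>j\<in>S. g j sums s j) \<Longrightarrow> (\<lambda>n. \<Sum>j\<in>S. (g j n::quat)) sums (\<Sum>j\<in>S. s j)"
  by (induct S rule: finite_induct) (auto intro: qsums_add qsums_zero)

lemma qreal_sel[simp]: "quat.Re (qreal t) = t" "Im1 (qreal t) = 0" "Im2 (qreal t) = 0" "Im3 (qreal t) = 0"
  by (simp_all add: qreal_def)

lemma qreal_mult: "qreal a * qreal b = qreal (a * b)"
  by (simp add: quat_eq_iff)

lemma qreal_pow: "qreal a ^ n = qreal (a ^ n)"
  by (induct n) (simp_all add: quat_eq_iff qreal_mult[symmetric])

lemma qcnj_qreal: "qcnj (qreal a) = qreal a"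
  by (simp add: quat_eq_iff qcnj_def)

lemma qreal_sum: "(\<Sum>j\<in>A. qreal (g j)) = qreal (\<Sum>j\<in>A. g j)"
  by (simp add: quat_eq_iff quat_sum_sel)

definition sT :: "nat \<Rightarrow> real" where "sT n = (\<Sum>j\<le>n. T n j)"

lemma P_qreal: "P n (qreal t) = qreal (t ^ n * (sT n / cc n))"
proof -
  have "(\<Sum>j\<le>n. qreal (T n j) * qreal t ^ (n - j) * qcnj (qreal t) ^ j)
      = (\<Sum>j\<le>n. qreal (T n j * t ^ n))"
  proof (rule sum.cong[OF refl])
    fix j assume "j \<in> {..n}"
    then have "t ^ (n - j) * t ^ j = t ^ n" by (simp add: power_add[symmetric])
    then show "qreal (T n j) * qreal t ^ (n - j) * qcnj (qreal t) ^ j = qreal (T n j * t ^ n)"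
      by (simp add: qcnj_qreal qreal_pow qreal_mult mult.assoc)
  qed
  then show ?thesis
    by (simp add: P_def qreal_sum qreal_mult sT_def sum_distrib_right[symmetric] field_simps)
qed

definition Salt :: "nat \<Rightarrow> real" where "Salt m = (\<Sum>j\<le>m. (-1) ^ j * (real m - real j + 1))"

lemma S_Suc: "Salt (Suc m) = real m + 2 - Salt m"
proof -
  have "Salt (Suc m) = (real m + 2) + (\<Sum>j\<le>m. (-1) ^ Suc j * (real (Suc m) - real (Suc j) + 1))"
    unfolding Salt_def by (subst sum.atMost_Suc_shift) simp
  also have "(\<Sum>j\<le>m. (-1) ^ Suc j * (real (Suc m) - real (Suc j) + 1)) = - Salt m"
    unfolding Salt_def by (simp add: sum_negf[symmetric])
  finally show ?thesis by simp
qed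

lemma S_pos: "0 < Salt m \<and> Salt m \<le> real m + 1"
  proof (induct m)
  case 0 then show ?case by (simp add: Salt_def)
next
  case (Suc m) then show ?case by (simp add: S_Suc)
qed

lemma cc_S: "cc m = 2 / ((real m + 1) * (real m + 2)) * Salt m"
  unfolding cc_def Salt_def T_def by (simp add: sum_distrib_left field_simps)

lemma cc_nz: "cc m \<noteq> 0"
  using S_pos[of m] by (simp add: cc_S)

lemma sT_pos: "0 < sT n"
proof -
  have "0 < T n 0" by (simp add: T_def)
  moreover have "0 \<le> T n j" if "j \<le> n" for j using that by (simp add: T_def)
  ultimately have "0 < T n 0 + (\<Sum>j\<in>{1..n}. T n j)"
    by (smt (verit) sum_nonneg atLeastAtMost_iff)
  also have "\<dots> = sT n" unfolding sT_def
    by (simp add: atMost_atLeast0 sum.atLeast_Suc_atMost)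
  finally show ?thesis .
qed

lemma powser_unique_real:
  fixes a :: "nat \<Rightarrow> real"
  assumes ev: "eventually (\<lambda>t. (\<lambda>n. a n * t ^ n) sums 0) (nhds 0)"
  shows "a m = 0"
proof -
  from ev obtain d where d: "d > 0" "\<And>t. dist t 0 < d \<Longrightarrow> (\<lambda>n. a n * t ^ n) sums 0"
    unfolding eventually_nhds_metric by blast
  show ?thesis
  proof (cases "m = 0")
    case True
    have "(\<lambda>n. a n * 0 ^ n) sums 0" using d(2)[of 0] d(1) by simp
    then show ?thesis using True by simp
  next
    case False
    show ?thesis
    proof (rule ccontr)
      assume am: "a m \<noteq> 0"
      show False
      proof (rule powser_0_nonzero[where r=d and a=a and \<xi>=0 and f="\<lambda>_. 0" and m=m])
        fix s :: real assume s: "0 < s" and H: "\<And>z::real. z \<in> cball 0 s - {0} \<Longrightarrow> (\<lambda>_. 0::real) z \<noteq> 0"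
        have "s \<in> cball 0 s - {0}" using s by auto
        from H[OF this] show False by simp
      qed (use d am False in auto)
    qed
  qed
qed

lemma qreal_tendsto: "(qreal \<longlongrightarrow> 0) (nhds 0)"
  unfolding tendsto_quat_iff by (simp add: filterlim_ident)

lemma ev_qreal: "eventually Q (nhds (0::quat)) \<Longrightarrow> eventually (\<lambda>t. Q (qreal t)) (nhds (0::real))"
  using qreal_tendsto unfolding filterlim_iff by blast

lemma comp_zero:
  fixes g :: "nat \<Rightarrow> real"
  assumes "eventually (\<lambda>t. (\<lambda>n. (t ^ n * c n) * g n) sums 0) (nhds 0)" "c n \<noteq> 0"
  shows "g n = 0"
proof -
  have "eventually (\<lambda>t. (\<lambda>n. (c n * g n) * t ^ n) sums 0) (nhds 0)"
    using assms(1) by (simp add: algebra_simps)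
  then have "c n * g n = 0" by (rule powser_unique_real)
  then show ?thesis using assms(2) by simp
qed

lemma zero_series:
  assumes "eventually (\<lambda>x. (\<lambda>n. P n x * d n) sums 0) (nhds 0)"
  shows "d n = 0"
proof -
  define c where "c n = sT n / cc n" for n
  have cn: "c n \<noteq> 0" using sT_pos[of n] cc_nz[of n] by (simp add: c_def)
  have ev: "eventually (\<lambda>t. (\<lambda>n. qreal (t ^ n * c n) * d n) sums 0) (nhds 0)"
    using ev_qreal[OF assms] by (simp add: P_qreal c_def)
  have "quat.Re (d n) = 0"
    by (rule comp_zero[where c=c and g="\<lambda>n. quat.Re (d n)", OF _ cn]) (rule eventually_mono[OF ev], simp add: sums_quat_iff)
  moreover have "Im1 (d n) = 0"
    by (rule comp_zero[where c=c and g="\<lambda>n. Im1 (d n)", OF _ cn]) (rule eventually_mono[OF ev], simp add: sums_quat_iff)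
  moreover have "Im2 (d n) = 0"
    by (rule comp_zero[where c=c and g="\<lambda>n. Im2 (d n)", OF _ cn]) (rule eventually_mono[OF ev], simp add: sums_quat_iff)
  moreover have "Im3 (d n) = 0"
    by (rule comp_zero[where c=c and g="\<lambda>n. Im3 (d n)", OF _ cn]) (rule eventually_mono[OF ev], simp add: sums_quat_iff)
  ultimately show ?thesis by (simp add: quat_eq_iff)
qed

lemma series_unique:
  assumes "series_near0 f a" "series_near0 f b"
  shows "a = b"
proof (intro ext)
  fix n i
  have "eventually (\<lambda>x. (\<lambda>n. P n x * (a n i - b n i)) sums 0) (nhds 0)"
    using assms unfolding series_near0_def
  proof eventually_elim
    case (elim x)
    have "(\<lambda>n. P n x * a n i - P n x * b n i) sums (f x i - f x i)"
      using elim by (intro qsums_diff) auto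
    then show ?case by (simp add: right_diff_distrib)
  qed
  then have "a n i - b n i = 0" by (rule zero_series)
  then show "a n i = b n i" by simp
qed

lemma series_germ:
  assumes "series_near0 f a" "germ_eq f g" shows "series_near0 g a"
  using assms unfolding series_near0_def germ_eq_def
  by eventually_elim auto

lemma series_to_germ:
  assumes "series_near0 f a" "series_near0 g a" shows "germ_eq f g"
  using assms unfolding series_near0_def germ_eq_def
  by eventually_elim (auto intro: qsums_unique)

lemma series_zero: "series_near0 (\<lambda>x i. 0) (\<lambda>n i. 0)"
  unfolding series_near0_def by (simp add: qsums_zero)

lemma series_rcomb:
  assumes "\<forall>j<k. series_near0 (b j) (\<alpha> j)"
  shows "series_near0 (rcomb k b c) (\<lambda>n i. \<Sum>j<k. \<alpha> j n i * c j)"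
proof -
  have "eventually (\<lambda>x. \<forall>j\<in>{..<k}. \<forall>i. (\<lambda>n. P n x * \<alpha> j n i) sums b j x i) (nhds 0)"
    using assms unfolding series_near0_def by (intro eventually_ball_finite) auto
  then show ?thesis unfolding series_near0_def
  proof eventually_elim
    case (elim x)
    show ?case
    proof
      fix i
      have "(\<lambda>n. \<Sum>j<k. P n x * \<alpha> j n i * c j) sums (\<Sum>j<k. b j x i * c j)"
        using elim by (intro qsums_sum) (auto intro: qsums_mult_right)
      then show "(\<lambda>n. P n x * (\<Sum>j<k. \<alpha> j n i * c j)) sums rcomb k b c x i"
        by (simp add: rcomb_def sum_distrib_left mult.assoc)
    qed
  qed
qed

lemma rcomb_in:
  assumes "right_lin_space M" "\<forall>j<k. b j \<in> M"
  shows "rcomb k b c \<in> M"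
  using assms(2)
proof (induct k)
  case 0
  then show ?case using assms(1) by (simp add: rcomb_def right_lin_space_def)
next
  case (Suc k)
  have e: "rcomb (Suc k) b c = (\<lambda>x i. rcomb k b c x i + (\<lambda>x i. b k x i * c k) x i)"
    by (simp add: rcomb_def)
  have "rcomb k b c \<in> M" using Suc by simp
  moreover have "(\<lambda>x i. b k x i * c k) \<in> M" using Suc assms(1) by (simp add: right_lin_space_def)
  ultimately show ?case unfolding e using assms(1) by (simp add: right_lin_space_def)
qed

lemma kernel:
  fixes D :: "nat \<Rightarrow> nat \<Rightarrow> quat"
  assumes "finite J" "k < card J"
  shows "\<exists>c. (\<forall>j. j \<notin> J \<longrightarrow> c j = 0) \<and> (\<exists>j\<in>J. c j \<noteq> 0) \<and> (\<forall>l<k. (\<Sum>j\<in>J. D l j * c j) = 0)"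
  using assms
proof (induct k arbitrary: J D)
  case 0
  then obtain p where p: "p \<in> J" by fastforce
  show ?case
    by (rule exI[of _ "\<lambda>j. if j = p then 1 else 0"]) (use p in auto)
next
  case (Suc k)
  show ?case
  proof (cases "\<forall>j\<in>J. D k j = 0")
    case True
    obtain c where c: "\<forall>j. j \<notin> J \<longrightarrow> c j = 0" "\<exists>j\<in>J. c j \<noteq> 0" "\<forall>l<k. (\<Sum>j\<in>J. D l j * c j) = 0"
      using Suc.hyps[of J D] Suc.prems by auto
    have "\<forall>l<Suc k. (\<Sum>j\<in>J. D l j * c j) = 0"
      using c(3) True by (auto simp: less_Suc_eq)
    then show ?thesis using c by blast
  next
    case False
    then obtain p where p: "p \<in> J" "D k p \<noteq> 0" by blast
    define J' where "J' = J - {p}"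
    have fJ': "finite J'" using Suc.prems by (simp add: J'_def)
    have cJ': "k < card J'" using Suc.prems p by (simp add: J'_def)
    define D' where "D' l j = D l j - D l p * qinv (D k p) * D k j" for l j
    obtain c' where c': "\<forall>j. j \<notin> J' \<longrightarrow> c' j = 0" "\<exists>j\<in>J'. c' j \<noteq> 0" "\<forall>l<k. (\<Sum>j\<in>J'. D' l j * c' j) = 0"
      using Suc.hyps[OF fJ' cJ', of D'] by blast
    define s where "s = (\<Sum>j\<in>J'. D k j * c' j)"
    define c where "c = c'(p := - (qinv (D k p) * s))"
    have Jsplit: "(\<Sum>j\<in>J. g j) = g p + (\<Sum>j\<in>J'. g j)" for g :: "nat \<Rightarrow> quat"
      using Suc.prems p by (simp add: J'_def sum.remove)
    have cJ'eq: "(\<Sum>j\<in>J'. g j * c j) = (\<Sum>j\<in>J'. g j * c' j)" for g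
      by (rule sum.cong) (auto simp: c_def J'_def)
    have cp: "c p = - (qinv (D k p) * s)" by (simp add: c_def)
    have row: "(\<Sum>j\<in>J. D l j * c j) = (\<Sum>j\<in>J'. D' l j * c' j)" for l
    proof -
      have "(\<Sum>j\<in>J. D l j * c j) = D l p * (- (qinv (D k p) * s)) + (\<Sum>j\<in>J'. D l j * c' j)"
        by (simp only: Jsplit cJ'eq cp)
      also have "D l p * (- (qinv (D k p) * s)) = - (\<Sum>j\<in>J'. D l p * qinv (D k p) * D k j * c' j)"
        by (simp add: s_def sum_distrib_left mult.assoc)
      finally show ?thesis
        by (simp add: D'_def left_diff_distrib sum_subtractf)
    qed
    have rowk: "(\<Sum>j\<in>J. D k j * c j) = 0"
    proof -
      have "(\<Sum>j\<in>J. D k j * c j) = D k p * (- (qinv (D k p) * s)) + s"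
        by (simp only: Jsplit cJ'eq cp s_def)
      also have "D k p * (- (qinv (D k p) * s)) = - ((D k p * qinv (D k p)) * s)"
        by (simp add: mult.assoc)
      finally show ?thesis using qinv_right[OF p(2)] by simp
    qed
    have "\<forall>l<Suc k. (\<Sum>j\<in>J. D l j * c j) = 0"
      using rowk row c'(3) by (auto simp: less_Suc_eq)
    moreover have "\<forall>j. j \<notin> J \<longrightarrow> c j = 0" using c'(1) p by (auto simp: c_def J'_def)
    moreover have "\<exists>j\<in>J. c j \<noteq> 0" using c'(2) by (auto simp: c_def J'_def)
    ultimately show ?thesis by blast
  qed
qed

definition skip :: "nat \<Rightarrow> nat \<Rightarrow> nat" where "skip j l = (if l < j then l else Suc l)"

lemma sum_skip:
  fixes g :: "nat \<Rightarrow> quat"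
  assumes "j < Suc m" "g j = 0"
  shows "(\<Sum>l<Suc m. g l) = (\<Sum>l<m. g (skip j l))"
proof -
  have "(\<Sum>l<Suc m. g l) = g j + (\<Sum>l\<in>{..<Suc m} - {j}. g l)"
    using assms by (intro sum.remove) simp_all
  also have "(\<Sum>l\<in>{..<Suc m} - {j}. g l) = (\<Sum>l<m. g (skip j l))"
  proof (rule sum.reindex_bij_betw[symmetric])
    show "bij_betw (skip j) {..<m} ({..<Suc m} - {j})"
      unfolding bij_betw_def
    proof
      show "inj_on (skip j) {..<m}" by (auto simp: inj_on_def skip_def split: if_splits)
      show "skip j ` {..<m} = {..<Suc m} - {j}"
      proof
        show "skip j ` {..<m} \<subseteq> {..<Suc m} - {j}" by (auto simp: skip_def)
        show "{..<Suc m} - {j} \<subseteq> skip j ` {..<m}"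
        proof
          fix l assume l: "l \<in> {..<Suc m} - {j}"
          show "l \<in> skip j ` {..<m}"
          proof (cases "l < j")
            case True then show ?thesis using l assms(1) by (auto simp: skip_def image_iff intro!: bexI[of _ l])
          next
            case False then show ?thesis using l by (auto simp: skip_def image_iff intro!: bexI[of _ "l - 1"])
          qed
        qed
      qed
    qed
  qed
  finally show ?thesis using assms by simp
qed

lemma reduce_step:
  assumes sp: "spans M (Suc m) b" and z: "germ_eq (rcomb (Suc m) b c) (\<lambda>x i. 0)"
    and j: "j < Suc m" "c j \<noteq> 0"
  shows "spans M m (\<lambda>l. b (skip j l))"
  unfolding spans_def
proof safe
  fix l assume "l < m"
  then have "skip j l < Suc m" by (simp add: skip_def)
  then show "b (skip j l) \<in> M" using sp by (simp add: spans_def)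
next
  fix f assume f: "f \<in> M"
  then obtain d where d: "germ_eq f (rcomb (Suc m) b d)" using sp by (auto simp: spans_def)
  define q where "q = qinv (c j) * d j"
  define e where "e l = d l - c l * q" for l
  have ej: "e j = 0"
    using qinv_right[OF j(2)] by (simp add: e_def q_def mult.assoc[symmetric])
  have "germ_eq f (rcomb m (\<lambda>l. b (skip j l)) (\<lambda>l. e (skip j l)))"
    using d z unfolding germ_eq_def
  proof eventually_elim
    case (elim x)
    show ?case
    proof (rule ext)
      fix i
      have "f x i = rcomb (Suc m) b d x i - rcomb (Suc m) b c x i * q"
        using elim by simp
      also have "\<dots> = (\<Sum>l<Suc m. b l x i * e l)"
        unfolding rcomb_def e_def
        by (simp only: sum_distrib_right right_diff_distrib sum_subtractf mult.assoc)
      also have "\<dots> = (\<Sum>l<m. b (skip j l) x i * e (skip j l))"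
        by (rule sum_skip) (use j ej in auto)
      finally show "f x i = rcomb m (\<lambda>l. b (skip j l)) (\<lambda>l. e (skip j l)) x i"
        by (simp add: rcomb_def)
    qed
  qed
  then show "\<exists>c. germ_eq f (rcomb m (\<lambda>l. b (skip j l)) c)" by blast
qed

lemma basis_exists:
  assumes "spans M k b"
  shows "\<exists>k'\<le>k. \<exists>b'. is_basis M k' b'"
  using assms
proof (induct k arbitrary: b)
  case 0
  then have "is_basis M 0 b" by (simp add: is_basis_def)
  then show ?case by blast
next
  case (Suc m)
  show ?case
  proof (cases "is_basis M (Suc m) b")
    case True then show ?thesis by blast
  next
    case False
    then obtain c j where c: "germ_eq (rcomb (Suc m) b c) (\<lambda>x i. 0)" "j < Suc m" "c j \<noteq> 0"
      using Suc.prems by (auto simp: is_basis_def)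
    from Suc.hyps[OF reduce_step[OF Suc.prems c]] show ?thesis by (auto intro: le_SucI)
  qed
qed

lemma indep_le:
  assumes sp: "spans M k b" and g: "\<forall>j<N. g j \<in> M"
    and ind: "\<forall>c. germ_eq (rcomb N g c) (\<lambda>x i. 0) \<longrightarrow> (\<forall>j<N. c j = 0)"
  shows "N \<le> k"
proof (rule ccontr)
  assume "\<not> N \<le> k"
  then have kN: "k < card {..<N}" by simp
  have "\<forall>j<N. \<exists>d. germ_eq (g j) (rcomb k b d)" using sp g by (auto simp: spans_def)
  then obtain Dc where Dc: "\<forall>j<N. germ_eq (g j) (rcomb k b (Dc j))" by metis
  obtain c where c: "\<forall>j. j \<notin> {..<N} \<longrightarrow> c j = 0" "\<exists>j\<in>{..<N}. c j \<noteq> 0"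
      "\<forall>l<k. (\<Sum>j\<in>{..<N}. (\<lambda>l j. Dc j l) l j * c j) = 0"
    using kernel[OF _ kN, of "\<lambda>l j. Dc j l"] by blast
  have "eventually (\<lambda>x. \<forall>j\<in>{..<N}. g j x = rcomb k b (Dc j) x) (nhds 0)"
    using Dc unfolding germ_eq_def by (intro eventually_ball_finite) auto
  then have "germ_eq (rcomb N g c) (\<lambda>x i. 0)" unfolding germ_eq_def
  proof eventually_elim
    case (elim x)
    show ?case
    proof (rule ext)
      fix i
      have "rcomb N g c x i = (\<Sum>j<N. (\<Sum>l<k. b l x i * Dc j l) * c j)"
        using elim by (simp add: rcomb_def)
      also have "\<dots> = (\<Sum>l<k. b l x i * (\<Sum>j<N. Dc j l * c j))"
        by (simp add: sum_distrib_right sum_distrib_left mult.assoc sum.swap[of _ "{..<N}"])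
      also have "\<dots> = 0" using c(3) by simp
      finally show "rcomb N g c x i = 0" .
    qed
  qed
  then show False using ind c(2) by auto
qed

definition rlin :: "((nat \<Rightarrow> quat) \<Rightarrow> (nat \<Rightarrow> quat)) \<Rightarrow> bool" where
  "rlin F \<longleftrightarrow> (\<forall>(S::nat set) v q. finite S \<longrightarrow>
     F (\<lambda>l. \<Sum>j\<in>S. v j l * q j) = (\<lambda>i. \<Sum>j\<in>S. F (v j) i * q j))"

lemma rlinD: "rlin F \<Longrightarrow> finite (S::nat set) \<Longrightarrow>
   F (\<lambda>l. \<Sum>j\<in>S. v j l * q j) = (\<lambda>i. \<Sum>j\<in>S. F (v j) i * q j)"
  unfolding rlin_def
  apply (drule spec[of _ S])
  apply (drule spec[of _ v])
  apply (drule spec[of _ q])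
  apply (erule mp)
  apply assumption
  done

lemma mv_rlin: "rlin (mv m k A)"
  unfolding rlin_def
proof (intro allI impI ext)
  fix S :: "nat set" and v q i assume S: "finite S"
  show "mv m k A (\<lambda>l. \<Sum>j\<in>S. v j l * q j) i = (\<Sum>j\<in>S. mv m k A (v j) i * q j)"
  proof (cases "i < m")
    case True
    have "(\<Sum>l<k. A i l * (\<Sum>j\<in>S. v j l * q j)) = (\<Sum>l<k. \<Sum>j\<in>S. A i l * v j l * q j)"
      by (simp only: sum_distrib_left mult.assoc)
    also have "\<dots> = (\<Sum>j\<in>S. \<Sum>l<k. A i l * v j l * q j)"
      by (rule sum.swap)
    also have "\<dots> = (\<Sum>j\<in>S. (\<Sum>l<k. A i l * v j l) * q j)"
      by (simp only: sum_distrib_right)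
    finally show ?thesis using True by (simp add: mv_def)
  next
    case False then show ?thesis by (simp add: mv_def)
  qed
qed

lemma funpow_rlin: "rlin F \<Longrightarrow> rlin (F ^^ n)"
proof (induct n)
  case 0 then show ?case by (simp add: rlin_def)
next
  case (Suc n)
  then have h: "rlin (F ^^ n)" by simp
  show ?case unfolding rlin_def
  proof (intro allI impI)
    fix S :: "nat set" and v q assume S: "finite S"
    have h1: "(F ^^ n) (\<lambda>l. \<Sum>j\<in>S. v j l * q j) = (\<lambda>i. \<Sum>j\<in>S. (F ^^ n) (v j) i * q j)"
      by (rule rlinD[OF h S])
    have h2: "F (\<lambda>i. \<Sum>j\<in>S. (F ^^ n) (v j) i * q j) = (\<lambda>i. \<Sum>j\<in>S. F ((F ^^ n) (v j)) i * q j)"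
      by (rule rlinD[OF Suc.prems S, where v="\<lambda>j. (F ^^ n) (v j)"])
    show "(F ^^ Suc n) (\<lambda>l. \<Sum>j\<in>S. v j l * q j) = (\<lambda>i. \<Sum>j\<in>S. (F ^^ Suc n) (v j) i * q j)"
      unfolding funpow.simps comp_def h1 h2 ..
  qed
qed

lemma CApow_lin: "finite (S::nat set) \<Longrightarrow> CApow r N C A n (\<lambda>l. \<Sum>j\<in>S. v j l * q j)
    = (\<lambda>i. \<Sum>j\<in>S. CApow r N C A n (v j) i * q j)"
proof -
  assume S: "finite S"
  have 1: "(mv N N A ^^ n) (\<lambda>l. \<Sum>j\<in>S. v j l * q j) = (\<lambda>i. \<Sum>j\<in>S. (mv N N A ^^ n) (v j) i * q j)"
    by (rule rlinD[OF funpow_rlin[OF mv_rlin[of N N A], of n] S])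
  have 2: "mv r N C (\<lambda>i. \<Sum>j\<in>S. (mv N N A ^^ n) (v j) i * q j)
      = (\<lambda>i. \<Sum>j\<in>S. mv r N C ((mv N N A ^^ n) (v j)) i * q j)"
    by (rule rlinD[OF mv_rlin[of r N C] S, where v="\<lambda>j. (mv N N A ^^ n) (v j)"])
  show ?thesis unfolding CApow_def 1 2 ..
qed

definition evec :: "nat \<Rightarrow> nat \<Rightarrow> quat" where "evec j = (\<lambda>l. if l = j then 1 else 0)"

lemma evec_decomp: "\<xi> \<in> qvecs N \<Longrightarrow> \<xi> = (\<lambda>l. \<Sum>j<N. evec j l * \<xi> j)"
proof -
  assume h: "\<xi> \<in> qvecs N"
  have e: "evec j l * \<xi> j = (if l = j then \<xi> l else 0)" for j l by (simp add: evec_def)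
  show ?thesis
  proof (rule ext)
    fix l
    show "\<xi> l = (\<Sum>j<N. evec j l * \<xi> j)"
    proof (cases "l < N")
      case True then show ?thesis by (simp add: e)
    next
      case False then show ?thesis using h by (simp add: e qvecs_def)
    qed
  qed
qed

lemma CApow_decomp: "\<xi> \<in> qvecs N \<Longrightarrow>
   CApow r N C A n \<xi> = (\<lambda>i. \<Sum>j<N. CApow r N C A n (evec j) i * \<xi> j)"
proof -
  assume h: "\<xi> \<in> qvecs N"
  have "CApow r N C A n \<xi> = CApow r N C A n (\<lambda>l. \<Sum>j<N. evec j l * \<xi> j)"
    using evec_decomp[OF h] by (rule arg_cong)
  also have "\<dots> = (\<lambda>i. \<Sum>j<N. CApow r N C A n (evec j) i * \<xi> j)"
    by (rule CApow_lin[where S="{..<N}" and v=evec and q=\<xi>]) simp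
  finally show ?thesis .
qed

lemma evec_qvecs: "j < N \<Longrightarrow> evec j \<in> qvecs N"
  by (simp add: evec_def qvecs_def)

lemma mv_qvecs: "mv m k A v \<in> qvecs m"
  by (simp add: mv_def qvecs_def)

definition trunc :: "nat \<Rightarrow> (nat \<Rightarrow> quat) \<Rightarrow> nat \<Rightarrow> quat" where
  "trunc N c = (\<lambda>j. if j < N then c j else 0)"

lemma trunc_qvecs: "trunc N c \<in> qvecs N" by (simp add: trunc_def qvecs_def)

lemma rcomb_trunc: "rcomb N b (trunc N c) = rcomb N b c"
  by (simp add: rcomb_def trunc_def)

lemma germ_sym: "germ_eq f g \<Longrightarrow> germ_eq g f"
  unfolding germ_eq_def by (auto elim: eventually_mono)

lemma CApow_Suc: "CApow r N C A (Suc n) \<xi> = CApow r N C A n (mv N N A \<xi>)"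
  unfolding CApow_def funpow_Suc_right by simp

lemma partA:
  assumes lin: "right_lin_space M"
    and fd: "fin_dim M"
    and ex: "\<forall>f\<in>M. \<exists>a. has_expansion r f a"
    and inv: "R0_invariant r M"
  shows "\<exists>N C A. realizes r M N C A"
proof -
  obtain k b where sp: "spans M k b" using fd by (auto simp: fin_dim_def)
  have bM: "\<forall>j<k. b j \<in> M" using sp by (simp add: spans_def)
  have "\<forall>j<k. \<exists>a. has_expansion r (b j) a" using bM ex by blast
  then obtain \<alpha> where \<alpha>: "\<forall>j<k. has_expansion r (b j) (\<alpha> j)" by metis
  have \<alpha>s: "\<forall>j<k. series_near0 (b j) (\<alpha> j)" using \<alpha> by (simp add: has_expansion_def)
  have \<alpha>v: "\<And>j n i. j < k \<Longrightarrow> r \<le> i \<Longrightarrow> \<alpha> j n i = 0"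
    using \<alpha> by (simp add: has_expansion_def qvecs_def)
  have "\<forall>j<k. \<exists>d. series_near0 (rcomb k b d) (\<lambda>n. \<alpha> j (Suc n))"
  proof (intro allI impI)
    fix j assume j: "j < k"
    obtain g where g: "g \<in> M" "has_expansion r g (\<lambda>n. \<alpha> j (Suc n))"
      using inv bM \<alpha> j unfolding R0_invariant_def by blast
    obtain d where d: "germ_eq g (rcomb k b d)" using sp g(1) by (auto simp: spans_def)
    have "series_near0 (rcomb k b d) (\<lambda>n. \<alpha> j (Suc n))"
      using series_germ[OF _ d] g(2) by (simp add: has_expansion_def)
    then show "\<exists>d. series_near0 (rcomb k b d) (\<lambda>n. \<alpha> j (Suc n))" by blast
  qed
  then obtain Acol where Acol: "\<forall>j<k. series_near0 (rcomb k b (Acol j)) (\<lambda>n. \<alpha> j (Suc n))" by metis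
  define A where "A l j = Acol j l" for l j
  define C where "C i j = \<alpha> j 0 i" for i j
  have rel: "\<alpha> j (Suc n) i = (\<Sum>l<k. \<alpha> l n i * A l j)" if "j < k" for j n i
  proof -
    have "(\<lambda>n. \<alpha> j (Suc n)) = (\<lambda>n i. \<Sum>l<k. \<alpha> l n i * Acol j l)"
      using series_unique[OF Acol[rule_format, OF that] series_rcomb[OF \<alpha>s]] .
    then show ?thesis unfolding A_def by (metis (no_types, lifting))
  qed
  have claim: "CApow r k C A n \<xi> = (\<lambda>i. \<Sum>j<k. \<alpha> j n i * \<xi> j)" for n \<xi>
  proof (induct n arbitrary: \<xi>)
    case 0
    show ?case
    proof (rule ext)
      fix i
      show "CApow r k C A 0 \<xi> i = (\<Sum>j<k. \<alpha> j 0 i * \<xi> j)"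
        using \<alpha>v by (cases "i < r") (auto simp: CApow_def mv_def C_def)
    qed
  next
    case (Suc n)
    show ?case
    proof (rule ext)
      fix i
      have "CApow r k C A (Suc n) \<xi> i = (\<Sum>l<k. \<alpha> l n i * mv k k A \<xi> l)"
        by (simp add: CApow_Suc Suc)
      also have "\<dots> = (\<Sum>l<k. \<alpha> l n i * (\<Sum>j<k. A l j * \<xi> j))"
        by (rule sum.cong) (auto simp: mv_def)
      also have "\<dots> = (\<Sum>l<k. \<Sum>j<k. \<alpha> l n i * A l j * \<xi> j)"
        by (simp only: sum_distrib_left mult.assoc)
      also have "\<dots> = (\<Sum>j<k. \<Sum>l<k. \<alpha> l n i * A l j * \<xi> j)"
        by (rule sum.swap)
      also have "\<dots> = (\<Sum>j<k. (\<Sum>l<k. \<alpha> l n i * A l j) * \<xi> j)"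
        by (simp only: sum_distrib_right)
      also have "\<dots> = (\<Sum>j<k. \<alpha> j (Suc n) i * \<xi> j)"
        by (rule sum.cong) (auto simp: rel)
      finally show "CApow r k C A (Suc n) \<xi> i = (\<Sum>j<k. \<alpha> j (Suc n) i * \<xi> j)" .
    qed
  qed
  have ser: "series_near0 (rcomb k b \<xi>) (\<lambda>n. CApow r k C A n \<xi>)" for \<xi>
    using series_rcomb[OF \<alpha>s, of \<xi>] by (simp add: claim)
  have "realizes r M k C A"
    unfolding realizes_def
  proof safe
    fix f assume f: "f \<in> M"
    then obtain d where d: "germ_eq f (rcomb k b d)" using sp by (auto simp: spans_def)
    have "series_near0 f (\<lambda>n. CApow r k C A n (trunc k d))"
      using series_germ[OF ser[of "trunc k d"] germ_sym[OF d[unfolded rcomb_trunc[symmetric, of k b d]]]] .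
    then show "\<exists>\<xi>\<in>qvecs k. series_near0 f (\<lambda>n. CApow r k C A n \<xi>)"
      using trunc_qvecs by blast
  next
    fix \<xi> assume "\<xi> \<in> qvecs k"
    show "\<exists>f\<in>M. series_near0 f (\<lambda>n. CApow r k C A n \<xi>)"
      using rcomb_in[OF lin bM] ser by blast
  qed
  then show ?thesis by blast
qed

lemma partB:
  assumes re: "realizes r M N C A"
  shows "R0_invariant r M"
  unfolding R0_invariant_def
proof safe
  fix f a assume f: "f \<in> M" and ha: "has_expansion r f a"
  obtain \<xi> where \<xi>: "\<xi> \<in> qvecs N" "series_near0 f (\<lambda>n. CApow r N C A n \<xi>)"
    using re f by (auto simp: realizes_def)
  have a: "a = (\<lambda>n. CApow r N C A n \<xi>)"
    using series_unique[OF _ \<xi>(2)] ha by (simp add: has_expansion_def)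
  obtain g where g: "g \<in> M" "series_near0 g (\<lambda>n. CApow r N C A n (mv N N A \<xi>))"
    using re mv_qvecs[of N N A \<xi>] by (auto simp: realizes_def)
  have e: "(\<lambda>n. a (Suc n)) = (\<lambda>n. CApow r N C A n (mv N N A \<xi>))"
    by (simp add: a CApow_Suc)
  have "\<forall>n. a (Suc n) \<in> qvecs r" using ha by (simp add: has_expansion_def)
  then have "\<forall>n. CApow r N C A n (mv N N A \<xi>) \<in> qvecs r"
    using fun_cong[OF e] by simp
  then have "has_expansion r g (\<lambda>n. a (Suc n))"
    using g(2) unfolding has_expansion_def e by simp
  then show "\<exists>g\<in>M. has_expansion r g (\<lambda>n. a (Suc n))" using g(1) by blast
qed

lemma partC:
  assumes lin: "right_lin_space M"
    and re: "realizes r M N C A"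
  shows "qdim M \<le> N \<and> (qdim M = N \<longleftrightarrow> observable r N C A)"
proof -
  have "\<forall>j<N. \<exists>f\<in>M. series_near0 f (\<lambda>n. CApow r N C A n (evec j))"
    using re evec_qvecs by (auto simp: realizes_def)
  then obtain fam where fam: "\<forall>j<N. fam j \<in> M \<and> series_near0 (fam j) (\<lambda>n. CApow r N C A n (evec j))"
    by metis
  have famM: "\<forall>j<N. fam j \<in> M" using fam by blast
  have fams: "\<forall>j<N. series_near0 (fam j) (\<lambda>n. CApow r N C A n (evec j))" using fam by blast
  have serf: "series_near0 (rcomb N fam \<xi>) (\<lambda>n. CApow r N C A n \<xi>)" if "\<xi> \<in> qvecs N" for \<xi>
    using series_rcomb[OF fams, of \<xi>] CApow_decomp[OF that] by simp
  have sp: "spans M N fam"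
    unfolding spans_def
  proof safe
    fix j assume "j < N" then show "fam j \<in> M" using famM by blast
  next
    fix f assume "f \<in> M"
    then obtain \<xi> where \<xi>: "\<xi> \<in> qvecs N" "series_near0 f (\<lambda>n. CApow r N C A n \<xi>)"
      using re by (auto simp: realizes_def)
    have "germ_eq f (rcomb N fam \<xi>)" by (rule series_to_germ[OF \<xi>(2) serf[OF \<xi>(1)]])
    then show "\<exists>c. germ_eq f (rcomb N fam c)" by blast
  qed
  obtain k' bb where k': "k' \<le> N" "is_basis M k' bb" using basis_exists[OF sp] by blast
  have ex: "\<exists>b. is_basis M (qdim M) b"
    unfolding qdim_def by (rule LeastI_ex) (use k' in blast)
  then obtain bq where bq: "is_basis M (qdim M) bq" by blast
  have le: "qdim M \<le> k'" unfolding qdim_def by (rule Least_le) (use k' in blast)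
  have dimle: "qdim M \<le> N" using le k' by simp
  have obs_eq: "observable r N C A \<Longrightarrow> qdim M = N"
  proof -
    assume obs: "observable r N C A"
    have ind: "\<forall>c. germ_eq (rcomb N fam c) (\<lambda>x i. 0) \<longrightarrow> (\<forall>j<N. c j = 0)"
    proof (rule allI, rule impI)
      fix c assume z: "germ_eq (rcomb N fam c) (\<lambda>x i. 0)"
      have s1: "series_near0 (\<lambda>x i. 0) (\<lambda>n. CApow r N C A n (trunc N c))"
        using series_germ[OF serf[OF trunc_qvecs] z[unfolded rcomb_trunc[symmetric, of N fam c]]] .
      have "(\<lambda>n. CApow r N C A n (trunc N c)) = (\<lambda>n i. 0)"
        by (rule series_unique[OF s1 series_zero])
      then have "\<forall>n. CApow r N C A n (trunc N c) = (\<lambda>i. 0)" by metis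
      then have "trunc N c = (\<lambda>i. 0)" using obs trunc_qvecs by (auto simp: observable_def)
      then show "\<forall>j<N. c j = 0" by (metis trunc_def)
    qed
    have spq: "spans M (qdim M) bq" using bq by (simp add: is_basis_def)
    have "N \<le> qdim M"
      by (rule indep_le[OF spq famM ind])
    then show "qdim M = N" using dimle by simp
  qed
  have eq_obs: "qdim M = N \<Longrightarrow> observable r N C A"
  proof -
   assume q: "qdim M = N"
   show "observable r N C A"
   proof (rule ccontr)
    assume nobs: "\<not> observable r N C A"
    then obtain \<xi> where \<xi>: "\<xi> \<in> qvecs N" "\<forall>n. CApow r N C A n \<xi> = (\<lambda>i. 0)" "\<xi> \<noteq> (\<lambda>i. 0)"
      by (auto simp: observable_def)
    obtain j where j: "\<xi> j \<noteq> 0" using \<xi>(3) by auto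
    have jN: "j < N" by (rule ccontr) (use \<xi>(1) j in \<open>auto simp: qvecs_def\<close>)
    then obtain m where m: "N = Suc m" by (cases N) auto
    have s0: "series_near0 (rcomb N fam \<xi>) (\<lambda>n i. 0)"
      using serf[OF \<xi>(1)] \<xi>(2) by simp
    have z: "germ_eq (rcomb N fam \<xi>) (\<lambda>x i. 0)" by (rule series_to_germ[OF s0 series_zero])
    have "spans M m (\<lambda>l. fam (skip j l))"
      by (rule reduce_step[of M m fam \<xi> j]) (use sp z jN j in \<open>simp_all add: m\<close>)
    then obtain k2 b2 where k2: "k2 \<le> m" "is_basis M k2 b2" using basis_exists by blast
    have "qdim M \<le> k2" unfolding qdim_def by (rule Least_le) (use k2 in blast)
    then have "qdim M \<le> m" using k2 by simp
    then show False using q m by simp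
   qed
  qed
  show ?thesis using dimle obs_eq eq_obs by blast
qed

theorem mainTheorem9:
  fixes r :: nat and M :: "(quat \<Rightarrow> nat \<Rightarrow> quat) set"
  assumes "right_lin_space M"
    and "fin_dim M"
    and "\<forall>f\<in>M. \<exists>a. has_expansion r f a"
  shows "(R0_invariant r M \<longleftrightarrow> (\<exists>N C A. realizes r M N C A)) \<and>
         (\<forall>N C A. realizes r M N C A \<longrightarrow>
            qdim M \<le> N \<and> (qdim M = N \<longleftrightarrow> observable r N C A))"
  using partA[OF assms] partB partC[OF assms(1)] by blast

end
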